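(* Let $\star$ be a star operation on a domain $R$. If every nonzero finitely generated ideal of $R$ is $\star$-basic, then every nonzero finitely generated ideal of $R$ is $\star_f$-basic. In particular, if every nonzero finitely generated ideal of $R$ is $v$-basic, then every nonzero finitely generated ideal of $R$ is $t$-basic.
   Context: A star operation on a domain $R$ with quotient field $K$ is a map $I\mapsto I^\star$ on nonzero fractional ideals with $(aI)^\star=aI^\star$ ($0\ne a\in K$), $R^\star=R$, $I\subseteq I^\star$, $I\subseteq J\Rightarrow I^\star\subseteq J^\star$, $I^{\star\star}=I^\star$. The associated star operation $\star_f$ is $I^{\star_f}=\bigcup J^\star$ over finitely generated subideals $J\subseteq I$. $I_v=(R:(R:I))$ with $(R:I)=\{x\in K:xI\subseteq R\}$, and $t=v_f$. For a nonzero ideal $I$, an ideal $J\subseteq I$ is a $\star$-reduction of $I$ if $(JI^n)^\star=(I^{n+1})^\star$ for some integer $n\ge0$; $I$ is $\star$-basic if every $\star$-reduction $J$ of $I$ satisfies $J^\star=I^\star$. *)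

theory Defs
  imports Main
begin

text \<open>A domain R is modelled as a subring of a field K (type 'k) such that
K is the quotient field of R.  Fractional ideals are R-submodules of K.\<close>

definition domain_with_qf :: "'k::field set \<Rightarrow> bool" where
  "domain_with_qf R \<longleftrightarrow> 0 \<in> R \<and> 1 \<in> R \<and>
     (\<forall>x\<in>R. \<forall>y\<in>R. x + y \<in> R \<and> x - y \<in> R \<and> x * y \<in> R) \<and>
     (\<forall>z. \<exists>a\<in>R. \<exists>b\<in>R. b \<noteq> 0 \<and> z = a / b)"

definition submod :: "'k::field set \<Rightarrow> 'k set \<Rightarrow> bool" where
  "submod R M \<longleftrightarrow> 0 \<in> M \<and> (\<forall>x\<in>M. \<forall>y\<in>M. x + y \<in> M) \<and> (\<forall>r\<in>R. \<forall>x\<in>M. r * x \<in> M)"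

definition frac_ideal :: "'k::field set \<Rightarrow> 'k set \<Rightarrow> bool" where
  "frac_ideal R I \<longleftrightarrow> submod R I \<and> I \<noteq> {0} \<and> (\<exists>d\<in>R. d \<noteq> 0 \<and> (\<forall>x\<in>I. d * x \<in> R))"

definition ideal_of :: "'k::field set \<Rightarrow> 'k set \<Rightarrow> bool" where
  "ideal_of R I \<longleftrightarrow> submod R I \<and> I \<subseteq> R"

definition rspan :: "'k::field set \<Rightarrow> 'k set \<Rightarrow> 'k set" where
  "rspan R S = \<Inter>{M. submod R M \<and> S \<subseteq> M}"

definition fin_gen :: "'k::field set \<Rightarrow> 'k set \<Rightarrow> bool" where
  "fin_gen R I \<longleftrightarrow> (\<exists>F. finite F \<and> I = rspan R F)"

definition ideal_mult :: "'k::field set \<Rightarrow> 'k set \<Rightarrow> 'k set \<Rightarrow> 'k set" where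
  "ideal_mult R I J = rspan R {x * y | x y. x \<in> I \<and> y \<in> J}"

fun ideal_pow :: "'k::field set \<Rightarrow> 'k set \<Rightarrow> nat \<Rightarrow> 'k set" where
  "ideal_pow R I 0 = R"
| "ideal_pow R I (Suc n) = ideal_mult R I (ideal_pow R I n)"

text \<open>Star operation: a map on nonzero fractional ideals (values elsewhere irrelevant).\<close>
definition star_op :: "'k::field set \<Rightarrow> ('k set \<Rightarrow> 'k set) \<Rightarrow> bool" where
  "star_op R st \<longleftrightarrow>
     (\<forall>I. frac_ideal R I \<longrightarrow> frac_ideal R (st I)) \<and>
     (\<forall>I a. frac_ideal R I \<longrightarrow> a \<noteq> 0 \<longrightarrow> st ((\<lambda>x. a * x) ` I) = (\<lambda>x. a * x) ` st I) \<and>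
     st R = R \<and>
     (\<forall>I. frac_ideal R I \<longrightarrow> I \<subseteq> st I) \<and>
     (\<forall>I J. frac_ideal R I \<longrightarrow> frac_ideal R J \<longrightarrow> I \<subseteq> J \<longrightarrow> st I \<subseteq> st J) \<and>
     (\<forall>I. frac_ideal R I \<longrightarrow> st (st I) = st I)"

definition star_f :: "'k::field set \<Rightarrow> ('k set \<Rightarrow> 'k set) \<Rightarrow> 'k set \<Rightarrow> 'k set" where
  "star_f R st I = \<Union>{st J | J. J \<subseteq> I \<and> frac_ideal R J \<and> fin_gen R J}"

definition colon :: "'k::field set \<Rightarrow> 'k set \<Rightarrow> 'k set" where
  "colon R I = {x. \<forall>y\<in>I. x * y \<in> R}"

definition v_op :: "'k::field set \<Rightarrow> 'k set \<Rightarrow> 'k set" where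
  "v_op R I = colon R (colon R I)"

definition t_op :: "'k::field set \<Rightarrow> 'k set \<Rightarrow> 'k set" where
  "t_op R = star_f R (v_op R)"

definition star_reduction :: "'k::field set \<Rightarrow> ('k set \<Rightarrow> 'k set) \<Rightarrow> 'k set \<Rightarrow> 'k set \<Rightarrow> bool" where
  "star_reduction R st J I \<longleftrightarrow> ideal_of R J \<and> J \<noteq> {0} \<and> J \<subseteq> I \<and>
     (\<exists>n. st (ideal_mult R J (ideal_pow R I n)) = st (ideal_pow R I (Suc n)))"

definition star_basic :: "'k::field set \<Rightarrow> ('k set \<Rightarrow> 'k set) \<Rightarrow> 'k set \<Rightarrow> bool" where
  "star_basic R st I \<longleftrightarrow> (\<forall>J. star_reduction R st J I \<longrightarrow> st J = st I)"

end

theory Submission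
  imports Defs
begin

definition clos :: "'k::field set \<Rightarrow> ('k set \<Rightarrow> 'k set) \<Rightarrow> bool" where
  "clos R st \<longleftrightarrow> (\<forall>I. frac_ideal R I \<longrightarrow> frac_ideal R (st I)) \<and>
     (\<forall>I. frac_ideal R I \<longrightarrow> I \<subseteq> st I) \<and>
     (\<forall>I J. frac_ideal R I \<longrightarrow> frac_ideal R J \<longrightarrow> I \<subseteq> J \<longrightarrow> st I \<subseteq> st J) \<and>
     (\<forall>I. frac_ideal R I \<longrightarrow> st (st I) = st I)"

lemma star_clos: "star_op R st \<Longrightarrow> clos R st"
  unfolding star_op_def clos_def by (elim conjE) (intro conjI; assumption)

lemma clos_frac: "clos R st \<Longrightarrow> frac_ideal R I \<Longrightarrow> frac_ideal R (st I)"
  unfolding clos_def by (elim conjE allE impE) 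

lemma clos_ext: "clos R st \<Longrightarrow> frac_ideal R I \<Longrightarrow> I \<subseteq> st I"
  unfolding clos_def by (elim conjE allE impE)

lemma clos_mono: "clos R st \<Longrightarrow> frac_ideal R I \<Longrightarrow> frac_ideal R J \<Longrightarrow> I \<subseteq> J \<Longrightarrow> st I \<subseteq> st J"
  unfolding clos_def by (elim conjE allE impE)

lemma clos_idem: "clos R st \<Longrightarrow> frac_ideal R I \<Longrightarrow> st (st I) = st I"
  unfolding clos_def by (elim conjE allE impE)

lemma frac_submod: "frac_ideal R I \<Longrightarrow> submod R I"
  unfolding frac_ideal_def by (elim conjE)

lemma frac_nz: "frac_ideal R I \<Longrightarrow> I \<noteq> {0}"
  unfolding frac_ideal_def by (elim conjE)

lemma rspan_submod: "submod R (rspan R S)"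
  unfolding submod_def
proof (intro conjI ballI)
  show "0 \<in> rspan R S" unfolding rspan_def submod_def by blast
next
  fix x y assume "x \<in> rspan R S" "y \<in> rspan R S"
  thus "x + y \<in> rspan R S" unfolding rspan_def submod_def by blast
next
  fix r x assume "r \<in> R" "x \<in> rspan R S"
  thus "r * x \<in> rspan R S" unfolding rspan_def submod_def by blast
qed

lemma rspan_sub: "S \<subseteq> rspan R S"
  unfolding rspan_def by auto

lemma rspan_least: "submod R M \<Longrightarrow> S \<subseteq> M \<Longrightarrow> rspan R S \<subseteq> M"
  unfolding rspan_def by auto

lemma rspan_memI: "x \<in> S \<Longrightarrow> x \<in> rspan R S"
  unfolding rspan_def by blast

lemma rspan_mono: "S \<subseteq> T \<Longrightarrow> rspan R S \<subseteq> rspan R T"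
  unfolding rspan_def by blast

lemma rspan_empty: "rspan R {} = {0}"
proof -
  have "submod R {0}" unfolding submod_def by auto
  hence "rspan R {} \<subseteq> {0}" by (rule rspan_least) auto
  moreover have "0 \<in> rspan R {}" using rspan_submod unfolding submod_def by blast
  ultimately show ?thesis by auto
qed

lemma dom_0: "domain_with_qf R \<Longrightarrow> 0 \<in> R"
  unfolding domain_with_qf_def by (elim conjE)

lemma dom_1: "domain_with_qf R \<Longrightarrow> 1 \<in> R"
  unfolding domain_with_qf_def by (elim conjE)

lemma dom_cl: "domain_with_qf R \<Longrightarrow> \<forall>x\<in>R. \<forall>y\<in>R. x + y \<in> R \<and> x - y \<in> R \<and> x * y \<in> R"
  unfolding domain_with_qf_def by (elim conjE)

lemma dom_add: "domain_with_qf R \<Longrightarrow> x \<in> R \<Longrightarrow> y \<in> R \<Longrightarrow> x + y \<in> R"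
  using dom_cl by blast

lemma dom_mult: "domain_with_qf R \<Longrightarrow> x \<in> R \<Longrightarrow> y \<in> R \<Longrightarrow> x * y \<in> R"
  using dom_cl by blast

lemma dom_submod: "domain_with_qf R \<Longrightarrow> submod R R"
  unfolding submod_def using dom_0 dom_add dom_mult by blast

lemma dom_ideal: "domain_with_qf R \<Longrightarrow> ideal_of R R"
  unfolding ideal_of_def using dom_submod by simp

lemma submod_mult: "submod R M \<Longrightarrow> r \<in> R \<Longrightarrow> x \<in> M \<Longrightarrow> r * x \<in> M"
  unfolding submod_def by blast

lemma submod_add: "submod R M \<Longrightarrow> x \<in> M \<Longrightarrow> y \<in> M \<Longrightarrow> x + y \<in> M"
  unfolding submod_def by blast

lemma R_span1: "domain_with_qf R \<Longrightarrow> R = rspan R {1}"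
proof
  assume d: "domain_with_qf R"
  show "rspan R {1} \<subseteq> R" using d dom_1 by (intro rspan_least dom_submod) auto
  show "R \<subseteq> rspan R {1}"
  proof
    fix r assume "r \<in> R"
    moreover have "1 \<in> rspan R {1}" by (rule rspan_memI) simp
    ultimately have "r * 1 \<in> rspan R {1}" by (rule submod_mult[OF rspan_submod])
    thus "r \<in> rspan R {1}" by simp
  qed
qed

lemma ideal_mult_ideal:
  assumes d: "domain_with_qf R" and "ideal_of R I" "ideal_of R J"
  shows "ideal_of R (ideal_mult R I J)"
proof -
  have "{x * y | x y. x \<in> I \<and> y \<in> J} \<subseteq> R"
    using assms(2,3) dom_mult[OF d] unfolding ideal_of_def by blast
  hence "ideal_mult R I J \<subseteq> R" unfolding ideal_mult_def by (rule rspan_least[OF dom_submod[OF d]])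
  thus ?thesis unfolding ideal_of_def ideal_mult_def using rspan_submod by blast
qed

lemma ideal_mult_mono: "I \<subseteq> I' \<Longrightarrow> J \<subseteq> J' \<Longrightarrow> ideal_mult R I J \<subseteq> ideal_mult R I' J'"
  unfolding ideal_mult_def by (rule rspan_mono) blast

lemma ideal_mult_gen: "x \<in> I \<Longrightarrow> y \<in> J \<Longrightarrow> x * y \<in> ideal_mult R I J"
  unfolding ideal_mult_def by (rule rspan_memI) blast

lemma ideal_mult_rspan:
  "ideal_mult R (rspan R F) (rspan R G) = rspan R {x * y | x y. x \<in> F \<and> y \<in> G}"
proof (rule equalityI)
  let ?M = "rspan R {x * y | x y. x \<in> F \<and> y \<in> G}"
  have sM: "submod R ?M" by (rule rspan_submod)
  have key: "\<forall>y\<in>rspan R G. x * y \<in> ?M" if xF: "x \<in> rspan R F" for x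
  proof -
    have "\<forall>f\<in>F. \<forall>y\<in>rspan R G. f * y \<in> ?M"
    proof
      fix f assume fF: "f \<in> F"
      have "submod R {y. f * y \<in> ?M}"
        unfolding submod_def
      proof (intro conjI ballI; simp)
        show "0 \<in> ?M" using sM unfolding submod_def by blast
      next
        fix a b assume "f * a \<in> ?M" "f * b \<in> ?M"
        thus "f * (a + b) \<in> ?M" using sM unfolding submod_def by (simp add: distrib_left)
      next
        fix r a assume "r \<in> R" "f * a \<in> ?M"
        hence "r * (f * a) \<in> ?M" using sM unfolding submod_def by blast
        thus "f * (r * a) \<in> ?M" by (simp add: mult.left_commute)
      qed
      moreover have "G \<subseteq> {y. f * y \<in> ?M}"
      proof
        fix y assume "y \<in> G"
        hence "f * y \<in> {x * y | x y. x \<in> F \<and> y \<in> G}" using fF by blast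
        thus "y \<in> {y. f * y \<in> ?M}" by (simp add: rspan_memI)
      qed
      ultimately have "rspan R G \<subseteq> {y. f * y \<in> ?M}" by (rule rspan_least)
      thus "\<forall>y\<in>rspan R G. f * y \<in> ?M" by blast
    qed
    hence "F \<subseteq> {x. \<forall>y\<in>rspan R G. x * y \<in> ?M}" by blast
    moreover have "submod R {x. \<forall>y\<in>rspan R G. x * y \<in> ?M}"
      unfolding submod_def
    proof (intro conjI ballI)
      show "0 \<in> {x. \<forall>y\<in>rspan R G. x * y \<in> ?M}" using sM unfolding submod_def by simp
    next
      fix a b assume "a \<in> {x. \<forall>y\<in>rspan R G. x * y \<in> ?M}" "b \<in> {x. \<forall>y\<in>rspan R G. x * y \<in> ?M}"
      thus "a + b \<in> {x. \<forall>y\<in>rspan R G. x * y \<in> ?M}" by (simp add: distrib_right submod_add[OF sM])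
    next
      fix r a assume "r \<in> R" "a \<in> {x. \<forall>y\<in>rspan R G. x * y \<in> ?M}"
      thus "r * a \<in> {x. \<forall>y\<in>rspan R G. x * y \<in> ?M}" by (simp add: mult.assoc submod_mult[OF sM])
    qed
    ultimately have "rspan R F \<subseteq> {x. \<forall>y\<in>rspan R G. x * y \<in> ?M}" by (intro rspan_least)
    thus ?thesis using xF by blast
  qed
  show "ideal_mult R (rspan R F) (rspan R G) \<subseteq> ?M"
    unfolding ideal_mult_def
  proof (rule rspan_least[OF sM], rule subsetI)
    fix z assume "z \<in> {x * y | x y. x \<in> rspan R F \<and> y \<in> rspan R G}"
    then obtain x y where "z = x * y" "x \<in> rspan R F" "y \<in> rspan R G" by blast
    thus "z \<in> ?M" using key by blast
  qed
  show "?M \<subseteq> ideal_mult R (rspan R F) (rspan R G)"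
    unfolding ideal_mult_def
  proof (rule rspan_mono, rule subsetI)
    fix z assume "z \<in> {x * y | x y. x \<in> F \<and> y \<in> G}"
    then obtain x y where "z = x * y" "x \<in> F" "y \<in> G" by blast
    moreover have "x \<in> rspan R F" "y \<in> rspan R G" using calculation by (simp_all add: rspan_memI)
    ultimately show "z \<in> {x * y | x y. x \<in> rspan R F \<and> y \<in> rspan R G}" by blast
  qed
qed

lemma fin_gen_mult:
  assumes "fin_gen R I" "fin_gen R J" shows "fin_gen R (ideal_mult R I J)"
proof -
  obtain F G where F: "finite F" "I = rspan R F" and G: "finite G" "J = rspan R G"
    using assms unfolding fin_gen_def by blast
  have "{x * y | x y. x \<in> F \<and> y \<in> G} = (\<lambda>(x,y). x * y) ` (F \<times> G)" by auto
  hence "finite {x * y | x y. x \<in> F \<and> y \<in> G}" using F G by simp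
  moreover have "ideal_mult R I J = rspan R {x * y | x y. x \<in> F \<and> y \<in> G}"
    using F(2) G(2) ideal_mult_rspan by simp
  ultimately show ?thesis unfolding fin_gen_def by blast
qed

lemma fin_gen_pow:
  assumes d: "domain_with_qf R" and "fin_gen R I" shows "fin_gen R (ideal_pow R I n)"
proof (induction n)
  case 0
  have "finite {1::'a} \<and> R = rspan R {1}" by (rule conjI[OF _ R_span1[OF d]]) simp
  hence "\<exists>F. finite F \<and> R = rspan R F" by (rule exI)
  then show ?case unfolding fin_gen_def by simp
next
  case (Suc n)
  then show ?case using fin_gen_mult assms by simp
qed

lemma ideal_pow_ideal:
  assumes d: "domain_with_qf R" and "ideal_of R I" shows "ideal_of R (ideal_pow R I n)"
  by (induction n) (auto simp: dom_ideal[OF d] ideal_mult_ideal[OF d] assms)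

lemma ideal_pow_elem:
  assumes d: "domain_with_qf R" and "a \<in> I" shows "a ^ n \<in> ideal_pow R I n"
proof (induction n)
  case 0 then show ?case using dom_1[OF d] by simp
next
  case (Suc n) then show ?case using ideal_mult_gen assms by simp
qed

lemma int_frac:
  assumes d: "domain_with_qf R" and "ideal_of R X" "X \<noteq> {0}" shows "frac_ideal R X"
proof -
  have "1 \<in> R" using dom_1[OF d] .
  moreover have "\<forall>x\<in>X. 1 * x \<in> R" using assms(2) unfolding ideal_of_def by auto
  ultimately have "\<exists>d\<in>R. d \<noteq> 0 \<and> (\<forall>x\<in>X. d * x \<in> R)" by (intro bexI[of _ 1]) auto
  thus ?thesis using assms(2,3) unfolding frac_ideal_def ideal_of_def by blast
qed

lemma nonzero_elem: "submod R X \<Longrightarrow> X \<noteq> {0} \<Longrightarrow> \<exists>a\<in>X. a \<noteq> 0"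
  unfolding submod_def by blast

lemma star_f_ge: "frac_ideal R L \<Longrightarrow> fin_gen R L \<Longrightarrow> L \<subseteq> X \<Longrightarrow> st L \<subseteq> star_f R st X"
  unfolding star_f_def by (rule Union_upper) blast

lemma star_f_mono: "X \<subseteq> Y \<Longrightarrow> star_f R st X \<subseteq> star_f R st Y"
  unfolding star_f_def by blast

lemma star_f_fg:
  assumes c: "clos R st" and "frac_ideal R I" "fin_gen R I" shows "star_f R st I = st I"
proof
  show "st I \<subseteq> star_f R st I" using star_f_ge assms by blast
  show "star_f R st I \<subseteq> st I" unfolding star_f_def
  proof (rule Union_least)
    fix X assume "X \<in> {st J | J. J \<subseteq> I \<and> frac_ideal R J \<and> fin_gen R J}"
    then obtain J where "X = st J" "J \<subseteq> I" "frac_ideal R J" by blast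
    thus "X \<subseteq> st I" using clos_mono[OF c _ assms(2)] by blast
  qed
qed

lemma directed:
  assumes d: "domain_with_qf R" and c: "clos R st" and X: "ideal_of R X"
    and "finite S" "S \<noteq> {}" "S \<subseteq> star_f R st X"
  shows "\<exists>F. finite F \<and> F \<subseteq> X \<and> rspan R F \<noteq> {0} \<and> S \<subseteq> st (rspan R F)"
  using assms(4,5,6)
proof (induction S rule: finite_ne_induct)
  case (singleton x)
  then obtain L where L: "x \<in> st L" "L \<subseteq> X" "frac_ideal R L" "fin_gen R L"
    unfolding star_f_def by blast
  then obtain F where "finite F" "L = rspan R F" unfolding fin_gen_def by blast
  moreover have "L \<noteq> {0}" using frac_nz[OF L(3)] .
  moreover have "F \<subseteq> L" using \<open>L = rspan R F\<close> rspan_memI by blast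
  ultimately show ?case using L by blast
next
  case (insert x S)
  then obtain F where F: "finite F" "F \<subseteq> X" "rspan R F \<noteq> {0}" "S \<subseteq> st (rspan R F)" by blast
  from insert obtain L where L: "x \<in> st L" "L \<subseteq> X" "frac_ideal R L" "fin_gen R L"
    unfolding star_f_def by blast
  then obtain F2 where F2: "finite F2" "L = rspan R F2" unfolding fin_gen_def by blast
  let ?U = "rspan R (F \<union> F2)"
  have sX: "submod R X" using X unfolding ideal_of_def by blast
  have "F2 \<subseteq> L" using F2 rspan_memI by blast
  hence UX: "?U \<subseteq> X" using F L sX by (intro rspan_least) auto
  have U1: "rspan R F \<subseteq> ?U" "L \<subseteq> ?U" using rspan_mono F2 by blast+
  have Unz: "?U \<noteq> {0}" using U1 F(3) rspan_submod unfolding submod_def by blast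
  have Ui: "ideal_of R ?U" using UX X rspan_submod unfolding ideal_of_def by blast
  have Uf: "frac_ideal R ?U" using int_frac[OF d Ui Unz] .
  have Ff: "frac_ideal R (rspan R F)"
    using int_frac[OF d _ F(3)] F UX U1 X rspan_submod unfolding ideal_of_def by blast
  have "st (rspan R F) \<subseteq> st ?U" using clos_mono[OF c Ff Uf U1(1)] .
  moreover have "st L \<subseteq> st ?U" using clos_mono[OF c L(3) Uf U1(2)] .
  ultimately have "st (rspan R F) \<subseteq> st ?U" "st L \<subseteq> st ?U" by blast+
  hence "insert x S \<subseteq> st ?U" using F(4) L(1) by blast
  moreover have "finite (F \<union> F2)" "F \<union> F2 \<subseteq> X" using F F2 \<open>F2 \<subseteq> L\<close> L(2) by auto
  ultimately show ?case using Unz by blast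
qed

lemma ideal_mult_submod: "submod R (ideal_mult R I J)"
  unfolding ideal_mult_def by (rule rspan_submod)

lemma mult_fin_approx:
  assumes sJ: "submod R J" and x: "x \<in> ideal_mult R J K"
  shows "\<exists>A. finite A \<and> A \<subseteq> J \<and> x \<in> ideal_mult R (rspan R A) K"
proof -
  let ?M = "{x. \<exists>A. finite A \<and> A \<subseteq> J \<and> x \<in> ideal_mult R (rspan R A) K}"
  have s: "submod R ?M"
    unfolding submod_def
  proof (intro conjI ballI)
    have "0 \<in> ideal_mult R (rspan R {}) K" using ideal_mult_submod unfolding submod_def by blast
    thus "0 \<in> ?M" by (intro CollectI exI[of _ "{}"]) simp
  next
    fix a b assume "a \<in> ?M" "b \<in> ?M"
    then obtain A B where A: "finite A" "A \<subseteq> J" "a \<in> ideal_mult R (rspan R A) K"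
      and B: "finite B" "B \<subseteq> J" "b \<in> ideal_mult R (rspan R B) K" by blast
    have "ideal_mult R (rspan R A) K \<subseteq> ideal_mult R (rspan R (A \<union> B)) K"
         "ideal_mult R (rspan R B) K \<subseteq> ideal_mult R (rspan R (A \<union> B)) K"
      by (intro ideal_mult_mono rspan_mono; simp)+
    hence "a + b \<in> ideal_mult R (rspan R (A \<union> B)) K"
      using A(3) B(3) by (intro submod_add[OF ideal_mult_submod]) auto
    moreover have "finite (A \<union> B)" "A \<union> B \<subseteq> J" using A B by auto
    ultimately show "a + b \<in> ?M" by blast
  next
    fix r a assume r: "r \<in> R" and "a \<in> ?M"
    then obtain A where A: "finite A" "A \<subseteq> J" "a \<in> ideal_mult R (rspan R A) K" by blast
    have "r * a \<in> ideal_mult R (rspan R A) K" using r A(3) by (rule submod_mult[OF ideal_mult_submod])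
    thus "r * a \<in> ?M" using A(1,2) by blast
  qed
  have "{x * y | x y. x \<in> J \<and> y \<in> K} \<subseteq> ?M"
  proof
    fix z assume "z \<in> {x * y | x y. x \<in> J \<and> y \<in> K}"
    then obtain a b where ab: "z = a * b" "a \<in> J" "b \<in> K" by blast
    have "a \<in> rspan R {a}" by (rule rspan_memI) simp
    hence "z \<in> ideal_mult R (rspan R {a}) K" using ab by (simp add: ideal_mult_gen)
    moreover have "finite {a}" "{a} \<subseteq> J" using ab by auto
    ultimately show "z \<in> ?M" by blast
  qed
  hence "ideal_mult R J K \<subseteq> ?M" unfolding ideal_mult_def[of R J K] by (rule rspan_least[OF s])
  thus ?thesis using x by blast
qed

lemma mult_fin_approx_set:
  assumes sJ: "submod R J" and "finite F" "F \<subseteq> ideal_mult R J K"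
  shows "\<exists>A. finite A \<and> A \<subseteq> J \<and> F \<subseteq> ideal_mult R (rspan R A) K"
  using assms(2,3)
proof (induction F rule: finite_induct)
  case empty show ?case by (intro exI[of _ "{}"]) simp
next
  case (insert x F)
  have "F \<subseteq> ideal_mult R J K" "x \<in> ideal_mult R J K" using insert.prems by simp_all
  from insert.IH[OF this(1)] obtain A where A: "finite A" "A \<subseteq> J" "F \<subseteq> ideal_mult R (rspan R A) K"
    by (elim exE conjE) simp
  from mult_fin_approx[OF sJ \<open>x \<in> ideal_mult R J K\<close>]
  obtain B where B: "finite B" "B \<subseteq> J" "x \<in> ideal_mult R (rspan R B) K"
    by (elim exE conjE) simp
  have "ideal_mult R (rspan R A) K \<subseteq> ideal_mult R (rspan R (A \<union> B)) K"
       "ideal_mult R (rspan R B) K \<subseteq> ideal_mult R (rspan R (A \<union> B)) K"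
    by (intro ideal_mult_mono rspan_mono; simp)+
  hence "insert x F \<subseteq> ideal_mult R (rspan R (A \<union> B)) K" using A(3) B(3) by blast
  moreover have "finite (A \<union> B)" "A \<union> B \<subseteq> J" using A B by auto
  ultimately show ?case by blast
qed

lemma main:
  assumes d: "domain_with_qf R" and c: "clos R st"
    and basic: "\<forall>I. ideal_of R I \<and> I \<noteq> {0} \<and> fin_gen R I \<longrightarrow> star_basic R st I"
    and I: "ideal_of R I" "I \<noteq> {0}" "fin_gen R I"
    and red: "star_reduction R (star_f R st) J I"
  shows "star_f R st J = star_f R st I"
proof -
  from red obtain n where J: "ideal_of R J" "J \<noteq> {0}" "J \<subseteq> I"
    and eq: "star_f R st (ideal_mult R J (ideal_pow R I n)) = star_f R st (ideal_pow R I (Suc n))"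
    unfolding star_reduction_def by blast
  define P where "P = ideal_pow R I (Suc n)"
  define K where "K = ideal_pow R I n"
  have sI: "submod R I" using I(1) unfolding ideal_of_def by (elim conjE)
  have sJ: "submod R J" using J(1) unfolding ideal_of_def by (elim conjE)
  obtain a where a: "a \<in> I" "a \<noteq> 0" using nonzero_elem[OF sI I(2)] by blast
  obtain j where j: "j \<in> J" "j \<noteq> 0" using nonzero_elem[OF sJ J(2)] by blast
  have Ki: "ideal_of R K" unfolding K_def using ideal_pow_ideal[OF d I(1)] .
  have aK: "a ^ n \<in> K" unfolding K_def using ideal_pow_elem[OF d a(1)] .
  have Pi: "ideal_of R P" unfolding P_def using ideal_pow_ideal[OF d I(1)] .
  have aP: "a ^ Suc n \<in> P" unfolding P_def using ideal_pow_elem[OF d a(1)] .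
  have Pnz: "P \<noteq> {0}" using aP a by auto
  have Pf: "frac_ideal R P" using int_frac[OF d Pi Pnz] .
  have Pg: "fin_gen R P" unfolding P_def using fin_gen_pow[OF d I(3)] .
  then obtain G where G: "finite G" "P = rspan R G" unfolding fin_gen_def by blast
  have "G \<noteq> {}" using G(2) Pnz rspan_empty by auto
  have "P \<subseteq> st P" using clos_ext[OF c Pf] .
  also have "\<dots> \<subseteq> star_f R st P" using star_f_ge[OF Pf Pg] by blast
  also have "\<dots> = star_f R st (ideal_mult R J K)" using eq unfolding P_def K_def by simp
  finally have PX: "P \<subseteq> star_f R st (ideal_mult R J K)" .
  have "G \<subseteq> P" unfolding G(2) by (auto intro: rspan_memI)
  hence GX: "G \<subseteq> star_f R st (ideal_mult R J K)" using PX by (rule order_trans)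
  have Xi: "ideal_of R (ideal_mult R J K)" using ideal_mult_ideal[OF d J(1) Ki] .
  obtain F where F: "finite F" "F \<subseteq> ideal_mult R J K" "rspan R F \<noteq> {0}" "G \<subseteq> st (rspan R F)"
    using directed[OF d c Xi G(1) \<open>G \<noteq> {}\<close> GX] by blast
  define L where "L = rspan R F"
  obtain A0 where A0: "finite A0" "A0 \<subseteq> J" "F \<subseteq> ideal_mult R (rspan R A0) K"
    using mult_fin_approx_set[OF sJ F(1,2)] by blast
  define J0 where "J0 = rspan R (insert j A0)"
  have J0J: "J0 \<subseteq> J" unfolding J0_def using A0 j by (intro rspan_least[OF sJ]) auto
  have "J \<subseteq> R" using J(1) unfolding ideal_of_def by (elim conjE)
  hence J0i: "ideal_of R J0" using J0J rspan_submod unfolding J0_def ideal_of_def by blast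
  have jJ0: "j \<in> J0" unfolding J0_def by (rule rspan_memI) simp
  have J0nz: "J0 \<noteq> {0}" using jJ0 j by blast
  have J0g: "fin_gen R J0" unfolding J0_def fin_gen_def using A0(1) by blast
  have J0f: "frac_ideal R J0" using int_frac[OF d J0i J0nz] .
  define Q where "Q = ideal_mult R J0 K"
  have Qi: "ideal_of R Q" unfolding Q_def using ideal_mult_ideal[OF d J0i Ki] .
  have "j * a ^ n \<in> Q" unfolding Q_def using ideal_mult_gen jJ0 aK by blast
  hence Qnz: "Q \<noteq> {0}" using j a by auto
  have Qf: "frac_ideal R Q" using int_frac[OF d Qi Qnz] .
  have "ideal_mult R (rspan R A0) K \<subseteq> Q" unfolding Q_def J0_def
    by (intro ideal_mult_mono rspan_mono) auto
  hence "F \<subseteq> Q" using A0 by blast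
  hence LQ: "L \<subseteq> Q" unfolding L_def using Qi unfolding ideal_of_def by (intro rspan_least) auto
  have Li: "ideal_of R L" using LQ Qi rspan_submod unfolding L_def ideal_of_def by blast
  have Lf: "frac_ideal R L" using int_frac[OF d Li] F(3) unfolding L_def by blast
  have PstQ: "P \<subseteq> st Q"
  proof -
    have "st L \<subseteq> st Q" using clos_mono[OF c Lf Qf LQ] .
    moreover have "submod R (st L)" using frac_submod[OF clos_frac[OF c Lf]] .
    hence "rspan R G \<subseteq> st L" using F(4) unfolding L_def by (rule rspan_least)
    ultimately show ?thesis using G(2) by blast
  qed
  have stQf: "frac_ideal R (st Q)" using clos_frac[OF c Qf] .
  have "st P \<subseteq> st (st Q)" using clos_mono[OF c Pf stQf PstQ] .
  hence s1: "st P \<subseteq> st Q" using clos_idem[OF c Qf] by simp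
  have "Q \<subseteq> P" unfolding Q_def P_def K_def using J0J J(3) by (simp add: ideal_mult_mono)
  hence "st Q \<subseteq> st P" using clos_mono[OF c Qf Pf] by blast
  hence "st Q = st P" using s1 by blast
  hence "star_reduction R st J0 I" unfolding star_reduction_def Q_def K_def P_def
    using J0i J0nz J0J J(3) by blast
  moreover have "star_basic R st I" using basic I by blast
  ultimately have stJ0: "st J0 = st I" unfolding star_basic_def by blast
  have If: "frac_ideal R I" using int_frac[OF d I(1,2)] .
  have sfI: "star_f R st I = st I" using star_f_fg[OF c If I(3)] .
  have "st J0 \<subseteq> star_f R st J" using star_f_ge[OF J0f J0g J0J] .
  moreover have "star_f R st J \<subseteq> star_f R st I" using star_f_mono[OF J(3)] .
  ultimately show ?thesis using stJ0 sfI by blast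
qed

lemma part:
  assumes d: "domain_with_qf R" and c: "clos R st"
  shows "(\<forall>I. ideal_of R I \<and> I \<noteq> {0} \<and> fin_gen R I \<longrightarrow> star_basic R st I) \<longrightarrow>
          (\<forall>I. ideal_of R I \<and> I \<noteq> {0} \<and> fin_gen R I \<longrightarrow> star_basic R (star_f R st) I)"
proof (intro impI allI)
  fix I assume b: "\<forall>I. ideal_of R I \<and> I \<noteq> {0} \<and> fin_gen R I \<longrightarrow> star_basic R st I"
    and "ideal_of R I \<and> I \<noteq> {0} \<and> fin_gen R I"
  hence I: "ideal_of R I" "I \<noteq> {0}" "fin_gen R I" by simp_all
  show "star_basic R (star_f R st) I" unfolding star_basic_def
  proof (intro allI impI)
    fix J assume "star_reduction R (star_f R st) J I"
    thus "star_f R st J = star_f R st I" by (rule main[OF d c b I])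
  qed
qed

lemma colon_submod: assumes d: "domain_with_qf R" shows "submod R (colon R X)"
  unfolding submod_def
proof (intro conjI ballI)
  show "0 \<in> colon R X" using dom_0[OF d] unfolding colon_def by simp
next
  fix a b assume "a \<in> colon R X" "b \<in> colon R X"
  thus "a + b \<in> colon R X" using dom_add[OF d] unfolding colon_def by (simp add: distrib_right)
next
  fix r a assume "r \<in> R" "a \<in> colon R X"
  thus "r * a \<in> colon R X" using dom_mult[OF d] unfolding colon_def by (simp add: mult.assoc)
qed

lemma colon_ext: "X \<subseteq> colon R (colon R X)"
  unfolding colon_def by (auto simp: mult.commute)

lemma colon_anti: "X \<subseteq> Y \<Longrightarrow> colon R Y \<subseteq> colon R X"
  unfolding colon_def by auto

lemma colon3: "colon R (colon R (colon R X)) = colon R X"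
  by (meson colon_anti colon_ext subset_antisym)

lemma v_clos: assumes d: "domain_with_qf R" shows "clos R (v_op R)"
  unfolding clos_def v_op_def
proof (intro conjI allI impI)
  fix I assume f: "frac_ideal R I"
  then obtain dd where dd: "dd \<in> R" "dd \<noteq> 0" "\<forall>x\<in>I. dd * x \<in> R" unfolding frac_ideal_def by blast
  have "dd \<in> colon R I" using dd unfolding colon_def by auto
  hence "\<forall>z\<in>colon R (colon R I). dd * z \<in> R" unfolding colon_def by (auto simp: mult.commute)
  moreover have "colon R (colon R I) \<noteq> {0}" using f colon_ext[of I R] unfolding frac_ideal_def
    using colon_submod[OF d] unfolding submod_def by blast
  ultimately show "frac_ideal R (colon R (colon R I))"
    unfolding frac_ideal_def using colon_submod[OF d] dd by blast
  show "I \<subseteq> colon R (colon R I)" by (rule colon_ext)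
  show "colon R (colon R (colon R (colon R I))) = colon R (colon R I)" using colon3 by metis
next
  fix I J :: "'a set" assume "I \<subseteq> J" thus "colon R (colon R I) \<subseteq> colon R (colon R J)"
    by (intro colon_anti)
qed

theorem proposition1p8:
  fixes R :: "'k::field set" and st :: "'k set \<Rightarrow> 'k set"
  assumes "domain_with_qf R" and "star_op R st"
  shows "((\<forall>I. ideal_of R I \<and> I \<noteq> {0} \<and> fin_gen R I \<longrightarrow> star_basic R st I) \<longrightarrow>
          (\<forall>I. ideal_of R I \<and> I \<noteq> {0} \<and> fin_gen R I \<longrightarrow> star_basic R (star_f R st) I))
       \<and> ((\<forall>I. ideal_of R I \<and> I \<noteq> {0} \<and> fin_gen R I \<longrightarrow> star_basic R (v_op R) I) \<longrightarrow>
          (\<forall>I. ideal_of R I \<and> I \<noteq> {0} \<and> fin_gen R I \<longrightarrow> star_basic R (t_op R) I))"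
  using part[OF assms(1) star_clos[OF assms(2)]] part[OF assms(1) v_clos[OF assms(1)]]
  unfolding t_op_def by blast

end
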